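(* Let $G$ be a group with polynomial growth of degree $k\in\mathbb{Z}_{\ge 0}$, and let $H\le G$ be a subgroup which also has polynomial growth of degree $k$. Then for every $g\in G$ there is a positive integer $n$ such that $g^n\in H$.
   Context: A finitely generated group $G$ with finite generating set $S$ has growth function $\beta(m)=\#\{g\in G : |g|_S\le m\}$, where $|g|_S$ is the word length. $G$ has polynomial growth of degree $k\in\mathbb{Z}_{\ge 0}$ if there are constants $0<\alpha\le\beta'$ with $\alpha m^k\le \beta(m)\le \beta' m^k$ for all $m\ge 1$ (this is independent of the finite generating set). A group with polynomial growth is in particular finitely generated. *)

theory Defs
  imports "HOL-Algebra.Algebra"
begin

definition word_ball :: "('a, 'b) monoid_scheme \<Rightarrow> 'a set \<Rightarrow> nat \<Rightarrow> 'a set" where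
  "word_ball G S m =
     {foldr (\<otimes>\<^bsub>G\<^esub>) xs \<one>\<^bsub>G\<^esub> | xs. length xs \<le> m \<and> set xs \<subseteq> S \<union> (\<lambda>s. inv\<^bsub>G\<^esub> s) ` S}"

definition growth_fun :: "('a, 'b) monoid_scheme \<Rightarrow> 'a set \<Rightarrow> nat \<Rightarrow> nat" where
  "growth_fun G S m = card (word_ball G S m)"

text \<open>Polynomial growth of degree k (w.r.t. some, equivalently any, finite generating set).\<close>
definition poly_growth_deg :: "('a, 'b) monoid_scheme \<Rightarrow> nat \<Rightarrow> bool" where
  "poly_growth_deg G k \<longleftrightarrow>
     (\<exists>S. finite S \<and> S \<subseteq> carrier G \<and> generate G S = carrier G \<and>
        (\<exists>\<alpha> \<beta>::real. 0 < \<alpha> \<and> \<alpha> \<le> \<beta> \<and>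
           (\<forall>m::nat. m \<ge> 1 \<longrightarrow>
               \<alpha> * real m ^ k \<le> real (growth_fun G S m) \<and>
               real (growth_fun G S m) \<le> \<beta> * real m ^ k)))"

end

theory Submission
  imports Defs
begin

context group
begin

lemma fold_closed: "set xs \<subseteq> carrier G \<Longrightarrow> foldr (\<otimes>) xs \<one> \<in> carrier G"
  by (induction xs) auto

lemma fold_append: "set xs \<subseteq> carrier G \<Longrightarrow> set ys \<subseteq> carrier G \<Longrightarrow>
  foldr (\<otimes>) (xs @ ys) \<one> = foldr (\<otimes>) xs \<one> \<otimes> foldr (\<otimes>) ys \<one>"
  by (induction xs) (auto simp: m_assoc fold_closed)

lemma fold_sub: "subgroup H G \<Longrightarrow> set xs \<subseteq> H \<Longrightarrow> foldr (\<otimes>) xs \<one> \<in> H"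
  by (induction xs) (auto intro: subgroup.one_closed subgroup.m_closed)

lemma ball_sub: "S \<subseteq> carrier G \<Longrightarrow> word_ball G S m \<subseteq> carrier G"
  unfolding word_ball_def by (force intro!: fold_closed)

lemma ball_mult:
  assumes S: "S \<subseteq> carrier G" and x: "x \<in> word_ball G S a" and y: "y \<in> word_ball G S b"
  shows "x \<otimes> y \<in> word_ball G S (a + b)"
proof -
  obtain xs where xs: "x = foldr (\<otimes>) xs \<one>" "length xs \<le> a" "set xs \<subseteq> S \<union> (\<lambda>s. inv s) ` S"
    using x unfolding word_ball_def by auto
  obtain ys where ys: "y = foldr (\<otimes>) ys \<one>" "length ys \<le> b" "set ys \<subseteq> S \<union> (\<lambda>s. inv s) ` S"
    using y unfolding word_ball_def by auto
  have A: "S \<union> (\<lambda>s. inv s) ` S \<subseteq> carrier G" using S by auto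
  have "set xs \<subseteq> carrier G" "set ys \<subseteq> carrier G" using xs(3) ys(3) A by auto
  then have "x \<otimes> y = foldr (\<otimes>) (xs @ ys) \<one>"
    using fold_append[of xs ys] xs(1) ys(1) by metis
  then show ?thesis unfolding word_ball_def using xs ys by (intro CollectI exI[of _ "xs@ys"]) auto
qed

lemma ball_mono: "a \<le> b \<Longrightarrow> word_ball G S a \<subseteq> word_ball G S b"
  unfolding word_ball_def by force

lemma ball_one: "\<one> \<in> word_ball G S m"
  unfolding word_ball_def by (intro CollectI exI[of _ "[]"]) auto

lemma ball_letter: "S \<subseteq> carrier G \<Longrightarrow> s \<in> S \<union> (\<lambda>s. inv s) ` S \<Longrightarrow> s \<in> word_ball G S 1"
  unfolding word_ball_def by (intro CollectI exI[of _ "[s]"]) auto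

lemma ball_pow:
  assumes S: "S \<subseteq> carrier G" and x: "x \<in> word_ball G S c"
  shows "x [^] n \<in> word_ball G S (c * n)"
proof (induction n)
  case 0 then show ?case using ball_one by simp
next
  case (Suc n)
  have "x [^] Suc n = x [^] n \<otimes> x" by simp
  moreover have "x [^] n \<otimes> x \<in> word_ball G S (c * n + c)"
    using ball_mult[OF S Suc x] .
  ultimately show ?case by (simp add: add.commute)
qed

lemma ball_list:
  assumes S: "S \<subseteq> carrier G" and B: "B \<subseteq> word_ball G S c" and xs: "set xs \<subseteq> B"
  shows "foldr (\<otimes>) xs \<one> \<in> word_ball G S (c * length xs)"
  using xs
proof (induction xs)
  case Nil then show ?case using ball_one by simp
next
  case (Cons a xs)
  have "a \<otimes> foldr (\<otimes>) xs \<one> \<in> word_ball G S (c + c * length xs)"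
    using ball_mult[OF S] Cons B by auto
  then show ?case by simp
qed

lemma generate_ball:
  assumes S: "S \<subseteq> carrier G" and x: "x \<in> generate G S"
  shows "\<exists>l. x \<in> word_ball G S l"
  using x
proof (induction rule: generate.induct)
  case one then show ?case using ball_one by blast
next
  case (incl h) then show ?case using ball_letter[OF S, of h] by blast
next
  case (inv h) then show ?case using ball_letter[OF S, of "inv h"] by blast
next
  case (eng h1 h2) then show ?case using ball_mult[OF S] by blast
qed

lemma finite_set_ball:
  assumes S: "S \<subseteq> carrier G" "generate G S = carrier G" and F: "finite F" "F \<subseteq> carrier G"
  shows "\<exists>c\<ge>1. F \<subseteq> word_ball G S c"
  using F
proof (induction F rule: finite_induct)
  case empty then show ?case by (intro exI[of _ 1]) auto
next
  case (insert x F)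
  then obtain c where c: "c \<ge> 1" "F \<subseteq> word_ball G S c" by auto
  obtain l where l: "x \<in> word_ball G S l" using generate_ball[OF S(1), of x] S(2) insert.prems by blast
  show ?case using c l ball_mono[of c "max c l" S] ball_mono[of l "max c l" S]
    by (intro exI[of _ "max c l"]) auto
qed

end

lemma finite_ball:
  assumes "finite S" shows "finite (word_ball G S m)"
proof -
  have "word_ball G S m = (\<lambda>xs. foldr (\<otimes>\<^bsub>G\<^esub>) xs \<one>\<^bsub>G\<^esub>) ` {xs. set xs \<subseteq> S \<union> (\<lambda>s. inv\<^bsub>G\<^esub> s) ` S \<and> length xs \<le> m}"
    unfolding word_ball_def by auto
  then show ?thesis using finite_lists_length_le[of "S \<union> (\<lambda>s. inv\<^bsub>G\<^esub> s) ` S" m] assms by simp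
qed

theorem lemma1:
  fixes G :: "('a, 'b) monoid_scheme" and H :: "'a set" and k :: nat
  assumes "group G"
    and "poly_growth_deg G k"
    and "subgroup H G"
    and "poly_growth_deg (G\<lparr>carrier := H\<rparr>) k"
  shows "\<forall>g \<in> carrier G. \<exists>n::nat. n > 0 \<and> g [^]\<^bsub>G\<^esub> n \<in> H"
proof (rule ballI, rule ccontr)
  fix g assume g: "g \<in> carrier G" and np: "\<not> (\<exists>n::nat. n > 0 \<and> g [^]\<^bsub>G\<^esub> n \<in> H)"
  interpret group G by fact
  obtain S \<alpha>1 \<beta> where S: "finite S" "S \<subseteq> carrier G" "generate G S = carrier G"
    and ab: "0 < \<alpha>1" "\<alpha>1 \<le> \<beta>"
    and gr: "\<And>m::nat. m \<ge> 1 \<Longrightarrow> real (growth_fun G S m) \<le> \<beta> * real m ^ k"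
    using assms(2) unfolding poly_growth_deg_def by metis
  obtain T \<alpha> \<beta>1 where T: "finite T" "T \<subseteq> H"
    and ab2: "0 < \<alpha>" "\<alpha> \<le> \<beta>1"
    and grH: "\<And>m::nat. m \<ge> 1 \<Longrightarrow> \<alpha> * real m ^ k \<le> real (growth_fun (G\<lparr>carrier := H\<rparr>) T m)"
    using assms(4) unfolding poly_growth_deg_def by auto
  have HG: "H \<subseteq> carrier G" using assms(3) subgroup.subset by blast
  have Tc: "T \<subseteq> carrier G" using T HG by auto
  let ?F = "insert g (T \<union> (\<lambda>s. inv\<^bsub>G\<^esub> s) ` T)"
  obtain c where c: "c \<ge> 1" "?F \<subseteq> word_ball G S c"
    using finite_set_ball[OF S(2,3), of ?F] T(1) Tc g by auto
  let ?BH = "\<lambda>m. word_ball (G\<lparr>carrier := H\<rparr>) T m"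
  have BH: "?BH m \<subseteq> word_ball G S (c * m) \<inter> H" for m
  proof
    fix x assume "x \<in> ?BH m"
    then obtain xs where xs: "x = foldr (\<otimes>\<^bsub>G\<^esub>) xs \<one>\<^bsub>G\<^esub>" "length xs \<le> m"
        "set xs \<subseteq> T \<union> (\<lambda>s. inv\<^bsub>G\<lparr>carrier := H\<rparr>\<^esub> s) ` T"
      unfolding word_ball_def by auto
    have inveq: "(\<lambda>s. inv\<^bsub>G\<lparr>carrier := H\<rparr>\<^esub> s) ` T = (\<lambda>s. inv\<^bsub>G\<^esub> s) ` T"
      using m_inv_consistent[OF assms(3)] T(2) by (intro image_cong) auto
    have xsT: "set xs \<subseteq> T \<union> (\<lambda>s. inv\<^bsub>G\<^esub> s) ` T" using xs(3) inveq by simp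
    have "x \<in> word_ball G S (c * length xs)"
      using ball_list[OF S(2), of "T \<union> (\<lambda>s. inv\<^bsub>G\<^esub> s) ` T" c xs] c xsT xs(1) by auto
    moreover have "word_ball G S (c * length xs) \<subseteq> word_ball G S (c * m)"
      using xs(2) by (intro ball_mono) simp
    moreover have "x \<in> H"
    proof -
      have "set xs \<subseteq> H" using xsT T(2) subgroup.m_inv_closed[OF assms(3)] by auto
      then show ?thesis unfolding xs(1) by (rule fold_sub[OF assms(3)])
    qed
    ultimately show "x \<in> word_ball G S (c * m) \<inter> H" by auto
  qed
  have key: "real (Suc m) * real (card (?BH m)) \<le> real (growth_fun G S (2 * c * m))" for m
  proof -
    let ?f = "\<lambda>(i, h). g [^]\<^bsub>G\<^esub> i \<otimes>\<^bsub>G\<^esub> h"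
    have sub: "?f ` ({0..m} \<times> ?BH m) \<subseteq> word_ball G S (2 * c * m)"
    proof clarify
      fix i h assume i: "i \<in> {0..m}" and h: "h \<in> ?BH m"
      have "g [^]\<^bsub>G\<^esub> i \<in> word_ball G S (c * i)" using ball_pow[OF S(2)] c g by auto
      also have "\<dots> \<subseteq> word_ball G S (c * m)" using i by (intro ball_mono) auto
      finally have gi: "g [^]\<^bsub>G\<^esub> i \<in> word_ball G S (c * m)" .
      have "g [^]\<^bsub>G\<^esub> i \<otimes>\<^bsub>G\<^esub> h \<in> word_ball G S (c * m + c * m)"
        using ball_mult[OF S(2) gi] BH h by blast
      then show "g [^]\<^bsub>G\<^esub> i \<otimes>\<^bsub>G\<^esub> h \<in> word_ball G S (2 * c * m)"
        by (metis mult_2 mult.assoc distrib_right)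
    qed
    have inj: "inj_on ?f ({0..m} \<times> ?BH m)"
    proof (rule inj_onI, clarify)
      fix i j :: nat and h h' assume h: "h \<in> ?BH m" and h': "h' \<in> ?BH m"
        and eq: "g [^]\<^bsub>G\<^esub> i \<otimes>\<^bsub>G\<^esub> h = g [^]\<^bsub>G\<^esub> j \<otimes>\<^bsub>G\<^esub> h'"
      have hH: "h \<in> H" "h' \<in> H" using BH h h' by auto
      hence hc: "h \<in> carrier G" "h' \<in> carrier G" using HG by auto
      have gen: "i' = j'" if ij: "i' \<le> j'" and e: "g [^]\<^bsub>G\<^esub> i' \<otimes>\<^bsub>G\<^esub> a = g [^]\<^bsub>G\<^esub> j' \<otimes>\<^bsub>G\<^esub> b"
        and a: "a \<in> H" and b: "b \<in> H" for i' j' :: nat and a b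
      proof (rule ccontr)
        assume "i' \<noteq> j'"
        with ij have pos: "j' - i' > 0" by simp
        have ac: "a \<in> carrier G" "b \<in> carrier G" using a b HG by auto
        have gp: "g [^]\<^bsub>G\<^esub> i' \<in> carrier G" "g [^]\<^bsub>G\<^esub> (j' - i') \<in> carrier G"
          using g by auto
        have gj: "g [^]\<^bsub>G\<^esub> j' = g [^]\<^bsub>G\<^esub> i' \<otimes>\<^bsub>G\<^esub> g [^]\<^bsub>G\<^esub> (j' - i')"
          using nat_pow_mult[OF g, of i' "j' - i'"] ij by simp
        have "g [^]\<^bsub>G\<^esub> i' \<otimes>\<^bsub>G\<^esub> a = g [^]\<^bsub>G\<^esub> i' \<otimes>\<^bsub>G\<^esub> (g [^]\<^bsub>G\<^esub> (j' - i') \<otimes>\<^bsub>G\<^esub> b)"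
          using e gj m_assoc[OF gp ac(2)] by simp
        hence ae: "a = g [^]\<^bsub>G\<^esub> (j' - i') \<otimes>\<^bsub>G\<^esub> b"
          by (rule l_cancel[OF _ ac(1) m_closed[OF gp(2) ac(2)] gp(1)])
        have "a \<otimes>\<^bsub>G\<^esub> inv\<^bsub>G\<^esub> b = g [^]\<^bsub>G\<^esub> (j' - i') \<otimes>\<^bsub>G\<^esub> (b \<otimes>\<^bsub>G\<^esub> inv\<^bsub>G\<^esub> b)"
          unfolding ae using m_assoc[OF gp(2) ac(2) inv_closed[OF ac(2)]] .
        hence "a \<otimes>\<^bsub>G\<^esub> inv\<^bsub>G\<^esub> b = g [^]\<^bsub>G\<^esub> (j' - i')"
          by (simp only: r_inv[OF ac(2)] r_one[OF gp(2)])
        moreover have "a \<otimes>\<^bsub>G\<^esub> inv\<^bsub>G\<^esub> b \<in> H"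
          by (rule subgroup.m_closed[OF assms(3) a subgroup.m_inv_closed[OF assms(3) b]])
        ultimately show False using np pos by (metis neq0_conv)
      qed
      have "i = j"
      proof (cases "i \<le> j")
        case True then show ?thesis using gen[OF True eq hH] by simp
      next
        case False then show ?thesis using gen[of j i h' h] eq hH by simp
      qed
      moreover have "h = h'"
        using eq \<open>i = j\<close> by (intro l_cancel[OF _ hc nat_pow_closed[OF g]]) simp
      ultimately show "i = j \<and> h = h'" by simp
    qed
    have fin: "finite (word_ball G S (2 * c * m))" using finite_ball S(1) by blast
    have "card (?f ` ({0..m} \<times> ?BH m)) \<le> card (word_ball G S (2 * c * m))"
      using card_mono[OF fin sub] .
    moreover have "card (?f ` ({0..m} \<times> ?BH m)) = Suc m * card (?BH m)"
      using card_image[OF inj] by (simp add: card_cartesian_product)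
    ultimately have "Suc m * card (?BH m) \<le> growth_fun G S (2 * c * m)"
      unfolding growth_fun_def by simp
    then show ?thesis by (metis of_nat_le_iff of_nat_mult)
  qed
  define C where "C = \<beta> * (2 * real c) ^ k / \<alpha>"
  define m where "m = nat \<lceil>C\<rceil> + 1"
  have m1: "m \<ge> 1" unfolding m_def by simp
  have mC: "real m > C" unfolding m_def by linarith
  have cpos: "2 * c * m \<ge> 1" using c m1 by simp
  have "\<alpha> * real m ^ k * real (Suc m) \<le> real (card (?BH m)) * real (Suc m)"
    using grH[OF m1] unfolding growth_fun_def by (intro mult_right_mono) auto
  also have "\<dots> \<le> \<beta> * real (2 * c * m) ^ k"
    using key[of m] gr[OF cpos] by (simp add: mult.commute)
  also have "\<dots> = (\<beta> * (2 * real c) ^ k) * real m ^ k"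
    by (simp add: power_mult_distrib)
  finally have ineq: "\<alpha> * real m ^ k * real (Suc m) \<le> (\<beta> * (2 * real c) ^ k) * real m ^ k" .
  have mk: "real m ^ k > 0" using m1 by simp
  have "\<alpha> * real (Suc m) \<le> \<beta> * (2 * real c) ^ k"
    using ineq mk by (simp add: mult.commute mult.left_commute)
  hence "real (Suc m) \<le> C" unfolding C_def using ab2 by (simp add: field_simps)
  then show False using mC by simp
qed

end
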